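(* In the public project problem with equal participation costs, the BC mechanism coincides with the VCG mechanism; equivalently, $S_i^{BCGC}(\theta_{-i})=0$ for all $i$ and all $\theta_{-i}$, where $S_i^{BCGC}(\theta_{-i})=\max_{\theta_i'\in[0,c]}\sum_{k=1}^n t_k^{VCG}(\theta_i',\theta_{-i})$.
   Context: Public project problem (equal participation costs): $n\ge2$ players, decisions $D=\{0,1\}$ (project cancelled/built), $\Theta_i=[0,c]$ with $c>0$, $v_i(d,\theta_i)=d(\theta_i-c/n)$. The efficient decision is $f(\theta)=1$ iff $\sum_i\theta_i\ge c$. Player $i$'s utility is $v_i(f(\theta),\theta_i)+t_i(\theta)$. The VCG (Clarke) mechanism has $t_i^{VCG}(\theta)=\sum_{j\ne i}v_j(f(\theta),\theta_j)-\max_{d\in D}\sum_{j\ne i}v_j(d,\theta_j)$. The BC (Bailey–Cavallo) mechanism is $t_i^{BC}(\theta)=t_i^{VCG}(\theta)-S_i^{BCGC}(\theta_{-i})/n$ with $S_i^{BCGC}(\theta_{-i})=\max_{\theta_i'\in\Theta_i}\sum_{k=1}^n t^{VCG}_k(\theta_i',\theta_{-i})$. *)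

theory Defs
  imports "HOL-Analysis.Analysis"
begin

text \<open>Players are 0,...,n-1;
  a type profile is a function theta :: nat => real (only values at indices < n matter).
  Decisions: 0 (cancelled) or 1 (built).\<close>

definition decisions :: "nat set" where
  "decisions = {0, 1}"

definition pp_v :: "nat \<Rightarrow> real \<Rightarrow> nat \<Rightarrow> real \<Rightarrow> real" where
  "pp_v n c d th = real d * (th - c / real n)"

definition pp_f :: "nat \<Rightarrow> real \<Rightarrow> (nat \<Rightarrow> real) \<Rightarrow> nat" where
  "pp_f n c theta = (if (\<Sum>i<n. theta i) \<ge> c then 1 else 0)"

definition t_VCG :: "nat \<Rightarrow> real \<Rightarrow> nat \<Rightarrow> (nat \<Rightarrow> real) \<Rightarrow> real" where
  "t_VCG n c i theta =
     (\<Sum>j\<in>{..<n} - {i}. pp_v n c (pp_f n c theta) (theta j))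
     - Max ((\<lambda>d. \<Sum>j\<in>{..<n} - {i}. pp_v n c d (theta j)) ` decisions)"

text \<open>S_i^{BCGC}(theta_{-i}) = max over theta_i' in [0,c] of the total VCG transfer at
  (theta_i', theta_{-i}). The value theta i of the argument profile is ignored.\<close>
definition S_BCGC :: "nat \<Rightarrow> real \<Rightarrow> nat \<Rightarrow> (nat \<Rightarrow> real) \<Rightarrow> real" where
  "S_BCGC n c i theta =
     (SUP th' \<in> {0..c}. \<Sum>k<n. t_VCG n c k (theta(i := th')))"

definition t_BC :: "nat \<Rightarrow> real \<Rightarrow> nat \<Rightarrow> (nat \<Rightarrow> real) \<Rightarrow> real" where
  "t_BC n c i theta = t_VCG n c i theta - S_BCGC n c i theta / real n"

end

theory Submission
  imports Defs
begin

lemma sumv: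
  assumes "k<n"
  shows "(\<Sum>j\<in>{..<n}-{k}. pp_v n c d (theta j)) =
         real d * ((\<Sum>j<n. theta j) - theta k - real (n-1)*c/real n)"
proof -
  have cd: "card ({..<n}-{k}) = n - 1" using assms by simp
  have "(\<Sum>j\<in>{..<n}-{k}. pp_v n c d (theta j)) =
        real d * ((\<Sum>j\<in>{..<n}-{k}. theta j) - real (card ({..<n}-{k})) * (c/real n))"
    unfolding pp_v_def by (simp add: sum_distrib_left[symmetric] sum_subtractf algebra_simps)
  also have "(\<Sum>j\<in>{..<n}-{k}. theta j) = (\<Sum>j<n. theta j) - theta k"
    using assms by (simp add: sum_diff1)
  finally show ?thesis using cd by simp
qed

lemma tv:
  assumes "k<n"
  shows "t_VCG n c k theta = real (pp_f n c theta) * ((\<Sum>j<n. theta j) - theta k - real (n-1)*c/real n)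
     - max 0 ((\<Sum>j<n. theta j) - theta k - real (n-1)*c/real n)"
  unfolding t_VCG_def decisions_def using sumv[OF assms] by (simp add: max_def)

lemma tv_le:
  assumes "k<n" shows "t_VCG n c k theta \<le> 0"
  unfolding tv[OF assms] pp_f_def by auto

theorem mainTheorem8:
  fixes n :: nat and c :: real
  assumes "n \<ge> 2" and "c > 0"
  shows "(\<forall>i<n. \<forall>theta. (\<forall>j<n. j \<noteq> i \<longrightarrow> theta j \<in> {0..c}) \<longrightarrow>
            (\<exists>th'\<in>{0..c}. (\<Sum>k<n. t_VCG n c k (theta(i := th'))) = S_BCGC n c i theta)
            \<and> S_BCGC n c i theta = 0)
       \<and> (\<forall>i<n. \<forall>theta. (\<forall>j<n. theta j \<in> {0..c}) \<longrightarrow> t_BC n c i theta = t_VCG n c i theta)"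
proof -
  have n0: "real n > 0" using assms by simp
  have key: "(\<exists>th'\<in>{0..c}. (\<Sum>k<n. t_VCG n c k (theta(i := th'))) = S_BCGC n c i theta)
            \<and> S_BCGC n c i theta = 0"
    if i: "i<n" and th: "\<forall>j<n. j \<noteq> i \<longrightarrow> theta j \<in> {0..c}" for i theta
  proof -
    define R where "R = (\<Sum>j\<in>{..<n}-{i}. theta j)"
    define B where "B = real (n-1)*c/real n"
    have Blt: "B < c" "B \<le> c - c/real n" using n0 assms
      by (auto simp: B_def field_simps of_nat_diff)
    have T: "(\<Sum>j<n. (theta(i:=x)) j) = R + x" for x
    proof -
      have "(\<Sum>j<n. (theta(i:=x)) j) = (theta(i:=x)) i + (\<Sum>j\<in>{..<n}-{i}. (theta(i:=x)) j)"
        using i by (simp add: sum.remove)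
      also have "(\<Sum>j\<in>{..<n}-{i}. (theta(i:=x)) j) = R"
        unfolding R_def by (rule sum.cong) auto
      finally show ?thesis by simp
    qed
    have Rk: "theta k \<le> R" if "k<n" "k\<noteq>i" for k
      unfolding R_def using that th by (intro member_le_sum) auto
    have R0: "R \<ge> 0" unfolding R_def using th by (intro sum_nonneg) auto
    obtain x where x: "x \<in> {0..c}" and z: "\<And>k. k<n \<Longrightarrow> t_VCG n c k (theta(i:=x)) = 0"
    proof (cases "R \<ge> B")
      case True
      show ?thesis
      proof (rule that[of c])
        fix k assume k: "k<n"
        have f: "pp_f n c (theta(i:=c)) = 1" unfolding pp_f_def T using R0 by simp
        have "(\<Sum>j<n. (theta(i:=c)) j) - (theta(i:=c)) k - B \<ge> 0"
          using True Rk[OF k] Blt assms(2) n0 unfolding T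
          by (cases "k=i") (auto simp: divide_nonneg_pos)
        then show "t_VCG n c k (theta(i:=c)) = 0" unfolding tv[OF k] f B_def by simp
      qed (use assms in auto)
    next
      case False
      show ?thesis
      proof (rule that[of 0])
        fix k assume k: "k<n"
        have f: "pp_f n c (theta(i:=0)) = 0" unfolding pp_f_def T using False Blt by simp
        have "(\<Sum>j<n. (theta(i:=0)) j) - (theta(i:=0)) k - B \<le> 0"
          using False th k unfolding T by (cases "k=i") auto
        then show "t_VCG n c k (theta(i:=0)) = 0" unfolding tv[OF k] f B_def by simp
      qed (use assms in auto)
    qed
    have S: "S_BCGC n c i theta = 0"
      unfolding S_BCGC_def
    proof (rule cSup_eq_maximum)
      show "0 \<in> (\<lambda>th'. \<Sum>k<n. t_VCG n c k (theta(i := th'))) ` {0..c}"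
        using x z by (intro image_eqI[of _ _ x]) auto
    next
      fix y assume "y \<in> (\<lambda>th'. \<Sum>k<n. t_VCG n c k (theta(i := th'))) ` {0..c}"
      then show "y \<le> 0" by (auto intro!: sum_nonpos tv_le)
    qed
    have "(\<Sum>k<n. t_VCG n c k (theta(i := x))) = 0" using z by simp
    then show ?thesis using S x by auto
  qed
  show ?thesis
  proof (intro conjI allI impI)
    fix i theta assume "i<n" "\<forall>j<n. j \<noteq> i \<longrightarrow> theta j \<in> {0..c}"
    then show "\<exists>th'\<in>{0..c}. (\<Sum>k<n. t_VCG n c k (theta(i := th'))) = S_BCGC n c i theta"
      "S_BCGC n c i theta = 0" using key by blast+
  next
    fix i theta assume "i<n" "\<forall>j<n. theta j \<in> {0..c}"
    then have "S_BCGC n c i theta = 0" using key by blast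
    then show "t_BC n c i theta = t_VCG n c i theta" unfolding t_BC_def by simp
  qed
qed

end
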